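(* Let $p$ be a prime and $s>1$, and let $F(x,y)$ be the formal group law of mod $p$ Morava $K$-theory $K(s)$. Then $$F(x,y)\equiv x+y-v_s\sum_{0<j<p}\frac1p\binom{p}{j}\bigl(x^{p^{s-1}}\bigr)^{j}\bigl(y^{p^{s-1}}\bigr)^{p-j}$$ modulo $x^{p^{2(s-1)}}$ (and likewise modulo $y^{p^{2(s-1)}}$).
   Context: The coefficient ring of $K(s)$ is $\mathbb{F}_p[v_s,v_s^{-1}]$, $|v_s|=2(p^s-1)$, and its formal group law is the mod $p$ reduction of the $p$-typical formal group law over $\mathbb{Z}_{(p)}[v_s]$ obtained from the universal $p$-typical formal group law $F_{BP}$ over $BP_*=\mathbb{Z}_{(p)}[v_1,v_2,\dots]$ (Hazewinkel generators) by setting $v_i=0$ for all $i\ne s$; its logarithm is $\sum_{k\ge0}v_s^{(p^{ks}-1)/(p^s-1)}x^{p^{ks}}/p^k$. Note $\frac1p\binom pj\in\mathbb{Z}$ for $0<j<p$. *)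

theory Defs
  imports "HOL-Computational_Algebra.Computational_Algebra"
begin

text \<open>Bivariate power series over Q[v] are represented as rat poly fps fps:
  the outer variable is y, the inner variable is x, so the coefficient of
  x^a y^b in G is G $ b $ a.  The indeterminate v is [:0,1:].\<close>

definition bvX :: "rat poly fps fps" where
  "bvX = fps_const fps_X"

definition bvY :: "rat poly fps fps" where
  "bvY = fps_X"

definition bvconst :: "rat poly \<Rightarrow> rat poly fps fps" where
  "bvconst c = fps_const (fps_const c)"

text \<open>k-th coefficient of the K(s) logarithm over Z_(p)[v]:
  v^((p^(ks)-1)/(p^s-1)) / p^k, attached to x^(p^(ks)).\<close>
definition Ks_log_coeff :: "nat \<Rightarrow> nat \<Rightarrow> nat \<Rightarrow> rat poly" where
  "Ks_log_coeff p s k = monom (1 / of_nat p ^ k) ((p ^ (k * s) - 1) div (p ^ s - 1))"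

text \<open>The truncation k \<le> a+b is
  harmless: G^(p^(ks)) has no terms of total degree < p^(ks), and p^(ks) > k.\<close>
definition Ks_log2 :: "nat \<Rightarrow> nat \<Rightarrow> rat poly fps fps \<Rightarrow> rat poly fps fps" where
  "Ks_log2 p s G = Abs_fps (\<lambda>b. Abs_fps (\<lambda>a.
      \<Sum>k\<le>a+b. Ks_log_coeff p s k * ((G ^ (p ^ (k * s))) $ b $ a)))"

text \<open>F is the formal group law over Z_(p)[v] (inside Q[v]) with the K(s) logarithm:
  F(0,0) = 0 and log F(x,y) = log x + log y. Its mod p reduction is the FGL of K(s).\<close>
definition is_Ks_fgl :: "nat \<Rightarrow> nat \<Rightarrow> rat poly fps fps \<Rightarrow> bool" where
  "is_Ks_fgl p s F \<longleftrightarrow> F $ 0 $ 0 = 0 \<and> Ks_log2 p s F = Ks_log2 p s bvX + Ks_log2 p s bvY"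

definition in_Zp :: "nat \<Rightarrow> rat \<Rightarrow> bool" where
  "in_Zp p q \<longleftrightarrow> (\<exists>a b :: int. b \<noteq> 0 \<and> \<not> int p dvd b \<and> q = of_int a / of_int b)"

text \<open>q lies in p * Z_(p)[v], i.e. q reduces to 0 mod p.\<close>
definition p_divisible :: "nat \<Rightarrow> rat poly \<Rightarrow> bool" where
  "p_divisible p q \<longleftrightarrow> (\<forall>n. in_Zp p (coeff q n / of_nat p))"

definition Ks_rhs :: "nat \<Rightarrow> nat \<Rightarrow> rat poly fps fps" where
  "Ks_rhs p s = bvX + bvY - bvconst [:0, 1:] *
     (\<Sum>j\<in>{0<..<p}. bvconst [: of_nat (p choose j) / of_nat p :]
        * bvX ^ (p ^ (s - 1) * j) * bvY ^ (p ^ (s - 1) * (p - j)))"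

end

theory Submission
  imports Defs
begin


lemma in_Zp_int: "prime p \<Longrightarrow> in_Zp p (of_int n)"
  unfolding in_Zp_def by (rule exI[of _ n], rule exI[of _ 1]) (auto simp: prime_gt_1_nat)

lemma in_Zp_add:
  assumes "prime p" "in_Zp p x" "in_Zp p y" shows "in_Zp p (x + y)"
proof -
  obtain a b where ab: "b \<noteq> 0" "\<not> int p dvd b" "x = of_int a / of_int b" using assms(2) unfolding in_Zp_def by blast
  obtain c d where cd: "d \<noteq> 0" "\<not> int p dvd d" "y = of_int c / of_int d" using assms(3) unfolding in_Zp_def by blast
  have pr: "prime (int p)" using assms(1) by simp
  have "\<not> int p dvd b * d" using ab cd pr by (simp add: prime_dvd_mult_iff)
  moreover have "x + y = of_int (a*d + c*b) / of_int (b*d)" using ab cd by (simp add: field_simps)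
  ultimately show ?thesis unfolding in_Zp_def using ab cd by (intro exI[of _ "a*d+c*b"] exI[of _ "b*d"]) auto
qed

lemma in_Zp_mult:
  assumes "prime p" "in_Zp p x" "in_Zp p y" shows "in_Zp p (x * y)"
proof -
  obtain a b where ab: "b \<noteq> 0" "\<not> int p dvd b" "x = of_int a / of_int b" using assms(2) unfolding in_Zp_def by blast
  obtain c d where cd: "d \<noteq> 0" "\<not> int p dvd d" "y = of_int c / of_int d" using assms(3) unfolding in_Zp_def by blast
  have pr: "prime (int p)" using assms(1) by simp
  have "\<not> int p dvd b * d" using ab cd pr by (simp add: prime_dvd_mult_iff)
  moreover have "x * y = of_int (a*c) / of_int (b*d)" using ab cd by (simp add: field_simps)
  ultimately show ?thesis unfolding in_Zp_def using ab cd by (intro exI[of _ "a*c"] exI[of _ "b*d"]) auto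
qed

lemma in_Zp_uminus: "in_Zp p x \<Longrightarrow> in_Zp p (- x)"
  unfolding in_Zp_def by (metis minus_divide_left of_int_minus)

lemma in_Zp_0: "prime p \<Longrightarrow> in_Zp p 0" using in_Zp_int[of p 0] by simp

lemma in_Zp_sum:
  assumes "prime p" "\<And>i. i \<in> S \<Longrightarrow> in_Zp p (f i)" shows "in_Zp p (sum f S)"
  using assms(2)
proof (induction S rule: infinite_finite_induct)
  case (insert x F) then show ?case using in_Zp_add[OF assms(1)] by auto
qed (auto simp: in_Zp_0 assms(1))

definition pd :: "nat \<Rightarrow> nat \<Rightarrow> rat poly \<Rightarrow> bool" where
  "pd p j q \<longleftrightarrow> (\<forall>n. in_Zp p (coeff q n / of_nat p ^ j))"

lemma pd_0: "prime p \<Longrightarrow> pd p j 0" by (simp add: pd_def in_Zp_0)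

lemma pd_add: "prime p \<Longrightarrow> pd p j x \<Longrightarrow> pd p j y \<Longrightarrow> pd p j (x + y)"
  unfolding pd_def by (simp add: add_divide_distrib in_Zp_add)

lemma pd_uminus: "pd p j x \<Longrightarrow> pd p j (- x)"
  unfolding pd_def using in_Zp_uminus by (metis coeff_minus minus_divide_left)

lemma pd_diff: "prime p \<Longrightarrow> pd p j x \<Longrightarrow> pd p j y \<Longrightarrow> pd p j (x - y)"
  using pd_add[of p j x "-y"] pd_uminus by simp

lemma pd_sum:
  assumes "prime p" "\<And>i. i \<in> S \<Longrightarrow> pd p j (f i)" shows "pd p j (sum f S)"
  using assms(2)
proof (induction S rule: infinite_finite_induct)
  case (insert x F) then show ?case using pd_add[OF assms(1)] by auto
qed (auto simp: pd_0 assms(1))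

lemma pd_mult:
  assumes "prime p" "pd p i x" "pd p j y" shows "pd p (i + j) (x * y)"
  unfolding pd_def
proof
  fix n
  have "coeff (x*y) n / of_nat p ^ (i+j) = (\<Sum>k\<le>n. (coeff x k / of_nat p ^ i) * (coeff y (n-k) / of_nat p ^ j))"
    by (simp add: coeff_mult sum_divide_distrib power_add)
  also have "in_Zp p \<dots>"
    using assms by (intro in_Zp_sum in_Zp_mult) (auto simp: pd_def)
  finally show "in_Zp p (coeff (x*y) n / of_nat p ^ (i+j))" .
qed

lemma pd_mono:
  assumes "prime p" "pd p j x" "i \<le> j" shows "pd p i x"
  unfolding pd_def
proof
  fix n
  have "p \<noteq> 0" using assms(1) by auto
  then have "coeff x n / of_nat p ^ i = (coeff x n / of_nat p ^ j) * of_int (int p ^ (j - i))"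
    using assms(3) by (simp add: field_simps flip: power_add)
  also have "in_Zp p \<dots>" using assms by (intro in_Zp_mult in_Zp_int) (auto simp: pd_def)
  finally show "in_Zp p (coeff x n / of_nat p ^ i)" .
qed

lemma pd_int_poly: "prime p \<Longrightarrow> pd p 0 [:of_int c:]"
  unfolding pd_def by (auto simp: coeff_pCons split: nat.splits intro: in_Zp_int in_Zp_0)



lemma binom_div:
  fixes p e t i c :: nat
  assumes "prime p" "p ^ e dvd i * c" "i > 0" "\<not> p ^ t dvd i"
  shows "p ^ (e + 1 - t) dvd c"
proof (cases "c = 0")
  case False
  have nu: "\<not> is_unit p" using assms(1) by auto
  have "e \<le> multiplicity p (i * c)" using assms False nu by (intro multiplicity_geI) auto
  also have "\<dots> = multiplicity p i + multiplicity p c"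
    using assms False by (intro prime_elem_multiplicity_mult_distrib) auto
  finally have 1: "e \<le> multiplicity p i + multiplicity p c" .
  have "multiplicity p i < t" using assms nu by (intro multiplicity_lessI) auto
  then show ?thesis using 1 by (intro multiplicity_dvd') simp
qed simp

lemma binom_pp_div:
  fixes p e t i :: nat
  assumes "prime p" "0 < i" "i < p ^ e" "\<not> p ^ t dvd i"
  shows "p ^ (e + 1 - t) dvd (p ^ e choose i)"
proof -
  have pe: "p ^ e > 0" using assms(1) by (simp add: prime_gt_0_nat)
  obtain k where k: "i = Suc k" using assms(2) by (cases i) auto
  obtain n where n: "p ^ e = Suc n" using pe by (cases "p^e") auto
  have "i * (p ^ e choose i) = p ^ e * (n choose k)" using Suc_times_binomial[of k n] k n by simp
  then have "p ^ e dvd i * (p ^ e choose i)" by simp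
  then show ?thesis using binom_div[OF assms(1) _ assms(2) assms(4)] by blast
qed

definition II :: "nat \<Rightarrow> nat \<Rightarrow> nat \<Rightarrow> rat poly fps fps \<Rightarrow> bool" where
  "II p M j G \<longleftrightarrow> (\<forall>a b. (a < M \<or> b < M) \<longrightarrow> pd p j (G $ b $ a))"

definition SS :: "nat \<Rightarrow> rat poly fps fps \<Rightarrow> bool" where
  "SS m G \<longleftrightarrow> (\<forall>a b. (a < m \<or> b < m) \<longrightarrow> G $ b $ a = 0)"

definition JJ :: "nat \<Rightarrow> rat poly fps fps \<Rightarrow> bool" where
  "JJ d G \<longleftrightarrow> (\<forall>a b. a + b < d \<longrightarrow> G $ b $ a = 0)"

lemma mult_nth2: "(G * H) $ b $ a = (\<Sum>i\<le>b. \<Sum>k\<le>a. G $ i $ k * H $ (b - i) $ (a - k))"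
  by (simp add: fps_mult_nth fps_sum_nth atLeast0AtMost)

context fixes p M :: nat assumes pr: "prime p"
begin

lemma II_0: "II p M j 0" by (simp add: II_def pd_0 pr)
lemma II_add: "II p M j G \<Longrightarrow> II p M j H \<Longrightarrow> II p M j (G + H)"
  by (simp add: II_def pd_add pr)
lemma II_uminus: "II p M j G \<Longrightarrow> II p M j (- G)"
  by (simp add: II_def pd_uminus)
lemma II_diff: "II p M j G \<Longrightarrow> II p M j H \<Longrightarrow> II p M j (G - H)"
  by (simp add: II_def pd_diff pr)
lemma II_sum: "(\<And>i. i \<in> S \<Longrightarrow> II p M j (f i)) \<Longrightarrow> II p M j (sum f S)"
  by (simp add: II_def fps_sum_nth pd_sum pr)
lemma II_mono: "II p M j G \<Longrightarrow> i \<le> j \<Longrightarrow> II p M i G"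
  unfolding II_def using pd_mono[OF pr] by blast

lemma II_mult:
  assumes "II p M i G" "II p M j H" shows "II p M (i + j) (G * H)"
  unfolding II_def
proof (intro allI impI)
  fix a b assume ab: "a < M \<or> b < M"
  show "pd p (i + j) ((G * H) $ b $ a)" unfolding mult_nth2
    using assms ab by (intro pd_sum[OF pr] pd_mult[OF pr]) (auto simp: II_def)
qed

lemma II_one: "II p M 0 1"
proof -
  have "pd p 0 (1::rat poly)" using pd_int_poly[OF pr, of 1] by (simp add: one_pCons)
  then show ?thesis by (auto simp: II_def pd_0 pr fps_one_nth)
qed

lemma II_pow: "II p M j G \<Longrightarrow> II p M (j * n) (G ^ n)"
  by (induction n) (auto simp: II_one dest: II_mult[of j G "j * _"] simp: add.commute)

lemma of_nat_mult_nth2: "(of_nat c * G) $ b $ a = smult (of_nat c) (G $ b $ a)"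
proof -
  have "(of_nat c * G) $ b $ a = (fps_const (fps_const (of_nat c)) * G) $ b $ a"
    by (simp add: fps_of_nat)
  also have "\<dots> = of_nat c * G $ b $ a" by simp
  finally show ?thesis by (simp add: of_nat_poly)
qed

lemma pd_of_nat_mult:
  assumes "p ^ m dvd c" "pd p j q" shows "pd p (j + m) (smult (of_nat c) q)"
  unfolding pd_def
proof
  fix n
  obtain d where d: "c = p ^ m * d" using assms(1) by blast
  have "p > 0" using pr by (simp add: prime_gt_0_nat)
  then have "coeff (smult (of_nat c) q) n / of_nat p ^ (j + m) = of_int (int d) * (coeff q n / of_nat p ^ j)"
    by (simp add: d power_add field_simps)
  also have "in_Zp p \<dots>" using assms(2) by (intro in_Zp_mult[OF pr] in_Zp_int[OF pr]) (auto simp: pd_def)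
  finally show "in_Zp p (coeff (smult (of_nat c) q) n / of_nat p ^ (j + m))" .
qed

lemma II_of_nat_mult:
  assumes "p ^ m dvd c" "II p M j G" shows "II p M (j + m) (of_nat c * G)"
  unfolding II_def of_nat_mult_nth2 using assms pd_of_nat_mult unfolding II_def by blast

end


lemma bvconst_mult_nth: "(bvconst c * H) $ b $ a = c * H $ b $ a"
  by (simp add: bvconst_def)

lemma bvconst_nth: "bvconst c $ b $ a = (if a = 0 \<and> b = 0 then c else 0)"
  by (simp add: bvconst_def)

lemma mono_nth: "(bvX ^ i * bvY ^ j) $ b $ a = (if a = i \<and> b = j then 1 else 0)"
proof -
  have "bvX ^ i * bvY ^ j = fps_const (fps_X ^ i) * fps_X ^ j"
    by (simp add: bvX_def bvY_def fps_const_power)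
  then show ?thesis by (simp add: fps_X_power_nth)
qed

lemma SS_mult: assumes "SS m1 G" "SS m2 H" shows "SS (m1 + m2) (G * H)"
  unfolding SS_def
proof (intro allI impI)
  fix a b assume ab: "a < m1 + m2 \<or> b < m1 + m2"
  have "\<And>i k. i \<le> b \<Longrightarrow> k \<le> a \<Longrightarrow> G $ i $ k * H $ (b - i) $ (a - k) = 0"
  proof -
    fix i k assume "i \<le> b" "k \<le> a"
    then have "(k < m1 \<or> i < m1) \<or> (a - k < m2 \<or> b - i < m2)" using ab by auto
    then show "G $ i $ k * H $ (b - i) $ (a - k) = 0" using assms unfolding SS_def by auto
  qed
  then show "(G * H) $ b $ a = 0" unfolding mult_nth2 by (intro sum.neutral ballI) auto
qed

lemma SS_0m: "SS 0 G" by (simp add: SS_def)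
lemma SS_mult_right: "SS m G \<Longrightarrow> SS m (G * H)" using SS_mult[of m G 0 H] SS_0m by simp
lemma SS_mult_left: "SS m H \<Longrightarrow> SS m (G * H)" using SS_mult[of 0 G m H] SS_0m by simp
lemma SS_pow: "SS m G \<Longrightarrow> SS (m * n) (G ^ n)"
  by (induction n) (auto simp: SS_0m intro: SS_mult[of m G "m * _", simplified add.commute])
lemma SS_mono: "SS m G \<Longrightarrow> m' \<le> m \<Longrightarrow> SS m' G" by (auto simp: SS_def)
lemma SS_add: "SS m G \<Longrightarrow> SS m H \<Longrightarrow> SS m (G + H)" by (simp add: SS_def)
lemma SS_uminus: "SS m G \<Longrightarrow> SS m (- G)" by (simp add: SS_def)
lemma SS_sum: "(\<And>i. i \<in> S \<Longrightarrow> SS m (f i)) \<Longrightarrow> SS m (sum f S)"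
  by (simp add: SS_def fps_sum_nth)
lemma SS_II: "prime p \<Longrightarrow> SS M G \<Longrightarrow> II p M j G" by (simp add: SS_def II_def pd_0)

lemma JJ_mult: assumes "JJ d1 G" "JJ d2 H" shows "JJ (d1 + d2) (G * H)"
  unfolding JJ_def
proof (intro allI impI)
  fix a b assume ab: "a + b < d1 + d2"
  have "\<And>i k. i \<le> b \<Longrightarrow> k \<le> a \<Longrightarrow> G $ i $ k * H $ (b - i) $ (a - k) = 0"
  proof -
    fix i k assume "i \<le> b" "k \<le> a"
    then have "k + i < d1 \<or> (a - k) + (b - i) < d2" using ab by auto
    then show "G $ i $ k * H $ (b - i) $ (a - k) = 0" using assms unfolding JJ_def by auto
  qed
  then show "(G * H) $ b $ a = 0" unfolding mult_nth2 by (intro sum.neutral ballI) auto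
qed
lemma JJ_0m: "JJ 0 G" by (simp add: JJ_def)
lemma JJ_pow: "JJ d G \<Longrightarrow> JJ (d * n) (G ^ n)"
  by (induction n) (auto simp: JJ_0m intro: JJ_mult[of d G "d * _", simplified add.commute])
lemma JJ_mono: "JJ m G \<Longrightarrow> m' \<le> m \<Longrightarrow> JJ m' G" by (auto simp: JJ_def)
lemma JJ_sum: "(\<And>i. i \<in> S \<Longrightarrow> JJ m (f i)) \<Longrightarrow> JJ m (sum f S)"
  by (simp add: JJ_def fps_sum_nth)

context fixes p M :: nat assumes pr: "prime p"
begin

lemma II_pow0: "II p M 0 G \<Longrightarrow> II p M 0 (G ^ n)" using II_pow[OF pr, of M 0 G n] by simp

lemma II_pow_p:
  assumes G: "II p M 0 G" and H: "II p M 0 H" and j: "1 \<le> j" and D: "II p M j (G - H)"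
  shows "II p M (j + 1) (G ^ p - H ^ p)"
proof -
  define D' where "D' = G - H"
  have p2: "p \<ge> 2" using pr by (simp add: prime_ge_2_nat)
  have "G ^ p = (D' + H) ^ p" by (simp add: D'_def)
  also have "\<dots> = (\<Sum>k\<le>p. of_nat (p choose k) * D' ^ k * H ^ (p - k))" by (rule binomial_ring)
  also have "{..p} = insert 0 {1..p}" by auto
  finally have "G ^ p - H ^ p = (\<Sum>k\<in>{1..p}. of_nat (p choose k) * (D' ^ k * H ^ (p - k)))"
    by (simp add: mult.assoc)
  also have "II p M (j + 1) \<dots>"
  proof (rule II_sum[OF pr])
    fix k assume k: "k \<in> {1..p}"
    define m where "m = (if k < p then 1 else (0::nat))"
    have "p ^ m dvd (p choose k)" using k pr by (auto simp: m_def intro: dvd_choose_prime)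
    moreover have "II p M (j * k + 0) (D' ^ k * H ^ (p - k))"
      using II_mult[OF pr II_pow[OF pr D[folded D'_def]] II_pow[OF pr H, simplified]] by simp
    ultimately have "II p M (j * k + 0 + m) (of_nat (p choose k) * (D' ^ k * H ^ (p - k)))"
      by (rule II_of_nat_mult[OF pr])
    moreover have "j + 1 \<le> j * k + 0 + m"
    proof (cases "k < p")
      case True then show ?thesis using k j by (auto simp: m_def)
    next
      case False then have "k = p" using k by auto
      then have "j * k \<ge> j * 2" using p2 by simp
      then show ?thesis using j by linarith
    qed
    ultimately show "II p M (j + 1) (of_nat (p choose k) * (D' ^ k * H ^ (p - k)))"
      by (rule II_mono[OF pr])
  qed
  finally show ?thesis .
qed

lemma II_pow_pp:
  assumes G: "II p M 0 G" and H: "II p M 0 H" and j: "1 \<le> j" and D: "II p M j (G - H)"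
  shows "II p M (j + n) (G ^ (p ^ n) - H ^ (p ^ n))"
proof (induction n)
  case 0 then show ?case using D by simp
next
  case (Suc n)
  have "II p M (j + n + 1) ((G ^ p ^ n) ^ p - (H ^ p ^ n) ^ p)"
    using II_pow_p[OF II_pow[OF pr G, simplified] II_pow[OF pr H, simplified] _ Suc] j by simp
  then show ?case by (simp add: power_mult[symmetric] mult.commute)
qed

end


lemma coeff_monom_mult_gen:
  "coeff (monom r e * h) n = (if e \<le> n then r * coeff h (n - e) else 0)"
proof -
  have "coeff (monom r e * h) n = (\<Sum>i\<le>n. (if e = i then r else 0) * coeff h (n - i))"
    by (simp add: coeff_mult)
  also have "\<dots> = (\<Sum>i\<le>n. if e = i then r * coeff h (n - i) else 0)"
    by (intro sum.cong) auto
  also have "\<dots> = (if e \<le> n then r * coeff h (n - e) else 0)"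
    by (simp add: sum.delta)
  finally show ?thesis .
qed

context fixes p :: nat assumes pr: "prime p"
begin

lemma pd_monom_mult:
  assumes "pd p (j + k) h" shows "pd p j (monom (1 / of_nat p ^ k) e * h)"
  unfolding pd_def
proof
  fix n
  have p0: "p \<noteq> 0" using pr by auto
  show "in_Zp p (coeff (monom (1 / of_nat p ^ k) e * h) n / of_nat p ^ j)"
  proof (cases "e \<le> n")
    case True
    have "coeff (monom (1 / of_nat p ^ k) e * h) n / of_nat p ^ j = coeff h (n - e) / of_nat p ^ (j + k)"
      using True p0 by (simp only: coeff_monom_mult_gen if_True) (simp add: power_add field_simps)
    then show ?thesis using assms by (simp add: pd_def)
  qed (simp add: coeff_monom_mult_gen in_Zp_0 pr)
qed

lemma II_log_coeff:
  assumes "II p M (j + k) H" shows "II p M j (bvconst (Ks_log_coeff p s k) * H)"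
  using assms unfolding II_def bvconst_mult_nth Ks_log_coeff_def by (auto intro: pd_monom_mult)

lemma II_bvconst:
  assumes "pd p 0 c" shows "II p M 0 (bvconst c)"
  using assms by (auto simp: II_def bvconst_nth pd_0 pr)

lemma pd_one: "pd p 0 1" using pd_int_poly[OF pr, of 1] by (simp add: one_pCons)

lemma II_mono_term: "II p M 0 (bvX ^ i * bvY ^ k)"
  by (auto simp: II_def mono_nth pd_0 pr pd_one)

lemma SS_mono_term: "m \<le> i \<Longrightarrow> m \<le> k \<Longrightarrow> SS m (bvX ^ i * bvY ^ k)"
  by (auto simp: SS_def mono_nth)

lemma binom_XY:
  assumes "N \<ge> 1"
  shows "(bvX + bvY) ^ N - bvX ^ N - bvY ^ N = (\<Sum>i\<in>{1..<N}. of_nat (N choose i) * (bvX ^ i * bvY ^ (N - i)))"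
proof -
  have "(bvX + bvY) ^ N = (\<Sum>i\<le>N. of_nat (N choose i) * bvX ^ i * bvY ^ (N - i))" by (rule binomial_ring)
  also have "{..N} = insert 0 (insert N {1..<N})" using assms by auto
  finally show ?thesis using assms by (simp add: mult.assoc)
qed

lemma II_binom_XY:
  assumes "N \<ge> 1" "\<And>i. 0 < i \<Longrightarrow> i < N \<Longrightarrow> p ^ j dvd (N choose i) \<or> (M \<le> i \<and> M \<le> N - i)"
  shows "II p M j ((bvX + bvY) ^ N - bvX ^ N - bvY ^ N)"
  unfolding binom_XY[OF assms(1)]
proof (rule II_sum[OF pr])
  fix i assume i: "i \<in> {1..<N}"
  show "II p M j (of_nat (N choose i) * (bvX ^ i * bvY ^ (N - i)))"
  proof (cases "p ^ j dvd (N choose i)")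
    case True then show ?thesis using II_of_nat_mult[OF pr True II_mono_term] by simp
  next
    case False
    then have "M \<le> i \<and> M \<le> N - i" using assms(2)[of i] i by auto
    then have "SS M (bvX ^ i * bvY ^ (N - i))" by (intro SS_mono_term) auto
    then show ?thesis by (intro SS_II[OF pr] SS_mult_left[of M "bvX ^ i * bvY ^ (N - i)" "of_nat (N choose i)"])
  qed
qed

end


definition Cp :: "nat \<Rightarrow> nat \<Rightarrow> rat poly fps fps" where
  "Cp p s = (\<Sum>j\<in>{0<..<p}. bvconst [: of_nat (p choose j) / of_nat p :]
        * bvX ^ (p ^ (s - 1) * j) * bvY ^ (p ^ (s - 1) * (p - j)))"

definition vv :: "rat poly fps fps" where "vv = bvconst [:0, 1:]"

lemma Ks_rhs_eq: "Ks_rhs p s = bvX + bvY - vv * Cp p s"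
  by (simp add: Ks_rhs_def Cp_def vv_def)

context fixes p :: nat assumes pr: "prime p"
begin
lemma pd_v: "pd p 0 [:0, 1:]"
proof -
  have "[:0, 1:] = (monom 1 1 :: rat poly)" by (simp add: monom_Suc)
  then show ?thesis unfolding pd_def using in_Zp_0[OF pr] in_Zp_int[OF pr, of 1] by auto
qed

lemma II_v: "II p M 0 vv" unfolding vv_def by (rule II_bvconst[OF pr pd_v])

lemma II_X: "II p M 0 bvX" using II_mono_term[OF pr, of M 1 0] by simp
lemma II_Y: "II p M 0 bvY" using II_mono_term[OF pr, of M 0 1] by simp

end

context fixes p s :: nat assumes pr: "prime p" and s1: "s > 1"
begin


lemma MM_eq: "p ^ (2 * (s - 1)) = p ^ (s - 1) * p ^ (s - 1)" by (simp add: mult_2 power_add)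
lemma pq: "p ^ s = p ^ (s - 1) * p" using s1 by (metis Suc_diff_1 less_trans zero_less_one power_Suc2)

lemma pd_binom_p: "j \<in> {0<..<p} \<Longrightarrow> pd p 0 [: of_nat (p choose j) / of_nat p :]"
proof -
  assume j: "j \<in> {0<..<p}"
  then have "p dvd (p choose j)" using pr by (intro dvd_choose_prime) auto
  then obtain d where d: "p choose j = p * d" by blast
  have "p \<noteq> 0" using pr by auto
  then have "rat_of_nat (p choose j) / of_nat p = of_int (int d)" by (simp add: d)
  then have "[: of_nat (p choose j) / of_nat p :] = ([: of_int (int d) :] :: rat poly)" by (simp only: of_int_of_nat_eq)
  then show ?thesis using pd_int_poly[OF pr, of "int d"] by simp
qed

lemma II_Cp: "II p M 0 (Cp p s)"
  unfolding Cp_def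
proof (rule II_sum[OF pr])
  fix j assume j: "j \<in> {0<..<p}"
  have "II p M (0 + 0) (bvconst [: of_nat (p choose j) / of_nat p :] * (bvX ^ (p ^ (s - 1) * j) * bvY ^ (p ^ (s - 1) * (p - j))))"
    by (intro II_mult[OF pr] II_bvconst[OF pr] pd_binom_p[OF j] II_mono_term[OF pr])
  then show "II p M 0 (bvconst [: of_nat (p choose j) / of_nat p :] * bvX ^ (p ^ (s - 1) * j) * bvY ^ (p ^ (s - 1) * (p - j)))"
    by (simp add: mult.assoc)
qed

lemma SS_Cp: "SS (p ^ (s - 1)) (Cp p s)"
  unfolding Cp_def
proof (rule SS_sum)
  fix j assume j: "j \<in> {0<..<p}"
  have "SS (p ^ (s - 1)) (bvX ^ (p ^ (s - 1) * j) * bvY ^ (p ^ (s - 1) * (p - j)))" using j by (intro SS_mono_term) auto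
  then have "SS (p ^ (s - 1)) (bvconst [: of_nat (p choose j) / of_nat p :] * (bvX ^ (p ^ (s - 1) * j) * bvY ^ (p ^ (s - 1) * (p - j))))"
    by (rule SS_mult_left)
  then show "SS (p ^ (s - 1)) (bvconst [: of_nat (p choose j) / of_nat p :] * bvX ^ (p ^ (s - 1) * j) * bvY ^ (p ^ (s - 1) * (p - j)))"
    by (simp add: mult.assoc)
qed

lemma II_G: "II p M 0 (Ks_rhs p s)"
proof -
  have "II p M 0 (vv * Cp p s)" using II_mult[OF pr II_v[OF pr] II_Cp] by simp
  then show ?thesis unfolding Ks_rhs_eq by (intro II_diff[OF pr] II_add[OF pr] II_X[OF pr] II_Y[OF pr])
qed

end


context fixes p s :: nat assumes pr: "prime p" and s1: "s > 1"
begin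


lemma L2: "II p (p ^ (2 * (s - 1))) 2 (Ks_rhs p s ^ (p ^ s) - (bvX + bvY) ^ (p ^ s))"
proof -
  define W where "W = - (vv * Cp p s)"
  define N where "N = p ^ s"
  have G: "Ks_rhs p s = W + (bvX + bvY)" by (simp add: Ks_rhs_eq W_def)
  have SW: "SS (p ^ (s - 1)) W" unfolding W_def using SS_Cp[OF pr s1] by (intro SS_uminus SS_mult_left)
  have IW: "II p (p ^ (2 * (s - 1))) 0 W" unfolding W_def
    by (intro II_uminus[OF pr]) (rule II_mult[OF pr II_v[OF pr] II_Cp[OF pr s1], simplified])
  have IXY: "II p (p ^ (2 * (s - 1))) 0 (bvX + bvY)" using II_add[OF pr II_X[OF pr] II_Y[OF pr]] .
  have "Ks_rhs p s ^ N = (\<Sum>i\<le>N. of_nat (N choose i) * W ^ i * (bvX + bvY) ^ (N - i))"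
    unfolding G by (rule binomial_ring)
  also have "{..N} = insert 0 {1..N}" by auto
  finally have "Ks_rhs p s ^ N - (bvX + bvY) ^ N = (\<Sum>i\<in>{1..N}. of_nat (N choose i) * (W ^ i * (bvX + bvY) ^ (N - i)))"
    by (simp add: mult.assoc)
  also have "II p (p ^ (2 * (s - 1))) 2 \<dots>"
  proof (rule II_sum[OF pr])
    fix i assume i: "i \<in> {1..N}"
    show "II p (p ^ (2 * (s - 1))) 2 (of_nat (N choose i) * (W ^ i * (bvX + bvY) ^ (N - i)))"
    proof (cases "p ^ (s - 1) dvd i")
      case True
      then have "p ^ (s - 1) \<le> i" using i by (auto intro: dvd_imp_le)
      then have "p ^ (s - 1) * p ^ (s - 1) \<le> p ^ (s - 1) * i" by simp
      moreover have "SS (p ^ (s - 1) * i) (W ^ i)" by (rule SS_pow[OF SW])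
      ultimately have "SS (p ^ (2 * (s - 1))) (W ^ i)" using MM_eq[OF pr s1] by (auto intro: SS_mono)
      then have "SS (p ^ (2 * (s - 1))) (of_nat (N choose i) * (W ^ i * (bvX + bvY) ^ (N - i)))"
        by (intro SS_mult_left SS_mult_right)
      then show ?thesis by (rule SS_II[OF pr])
    next
      case False
      have "p ^ (s - 1) dvd N" unfolding N_def using pq[OF pr s1] by simp
      then have iN: "i < N" using False i by (cases "i = N") auto
      have "p ^ (s + 1 - (s - 1)) dvd (N choose i)" unfolding N_def
        using i iN False by (intro binom_pp_div[OF pr]) (auto simp: N_def)
      moreover have "s + 1 - (s - 1) = 2" using s1 by simp
      ultimately have d: "p ^ 2 dvd (N choose i)" by simp
      have "II p (p ^ (2 * (s - 1))) (0 + 0) (W ^ i * (bvX + bvY) ^ (N - i))"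
        by (intro II_mult[OF pr] II_pow0[OF pr IW] II_pow0[OF pr IXY])
      then have "II p (p ^ (2 * (s - 1))) (0 + 0 + 2) (of_nat (N choose i) * (W ^ i * (bvX + bvY) ^ (N - i)))"
        by (rule II_of_nat_mult[OF pr d])
      then show ?thesis by (simp only: add_0_left)
    qed
  qed
  finally show ?thesis unfolding N_def .
qed

end


lemma bvconst_mult: "bvconst a * bvconst b = bvconst (a * b)"
  by (simp add: bvconst_def)

lemma of_nat_bvconst: "(of_nat c :: rat poly fps fps) = bvconst (of_nat c)"
  by (simp add: bvconst_def fps_of_nat)

context fixes p s :: nat assumes pr: "prime p" and s1: "s > 1"
begin

lemma c1_eq: "Ks_log_coeff p s 1 = monom (1 / of_nat p) 1"
proof -
  have "p ^ s > 1" using prime_gt_1_nat[OF pr] s1 by (intro one_less_power) auto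
  then show ?thesis by (simp add: Ks_log_coeff_def)
qed

lemma coef_id: "Ks_log_coeff p s 1 * of_nat c = [:0, 1:] * [: of_nat c / of_nat p :]"
  unfolding c1_eq by (simp add: of_nat_poly poly_eq_iff coeff_monom_mult_gen coeff_pCons split: nat.split)

lemma A3:
  "bvconst (Ks_log_coeff p s 1) * ((bvX ^ p ^ (s - 1) + bvY ^ p ^ (s - 1)) ^ p
      - (bvX ^ p ^ (s - 1)) ^ p - (bvY ^ p ^ (s - 1)) ^ p) = vv * Cp p s"
proof -
  define A where "A = bvX ^ p ^ (s - 1)"
  define B where "B = bvY ^ p ^ (s - 1)"
  have p1: "p \<ge> 1" using prime_gt_1_nat[OF pr] by simp
  have "(A + B) ^ p = (\<Sum>j\<le>p. of_nat (p choose j) * A ^ j * B ^ (p - j))" by (rule binomial_ring)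
  also have "{..p} = insert 0 (insert p {0<..<p})" using p1 by auto
  finally have e: "(A + B) ^ p - A ^ p - B ^ p = (\<Sum>j\<in>{0<..<p}. of_nat (p choose j) * A ^ j * B ^ (p - j))"
    using p1 by simp
  have "bvconst (Ks_log_coeff p s 1) * ((A + B) ^ p - A ^ p - B ^ p)
      = (\<Sum>j\<in>{0<..<p}. bvconst (Ks_log_coeff p s 1) * of_nat (p choose j) * A ^ j * B ^ (p - j))"
    unfolding e by (simp add: sum_distrib_left mult.assoc)
  also have "\<dots> = (\<Sum>j\<in>{0<..<p}. vv * (bvconst [: of_nat (p choose j) / of_nat p :]
        * bvX ^ (p ^ (s - 1) * j) * bvY ^ (p ^ (s - 1) * (p - j))))"
  proof (rule sum.cong[OF refl])
    fix j
    have "bvconst (Ks_log_coeff p s 1) * of_nat (p choose j) = vv * bvconst [: of_nat (p choose j) / of_nat p :]"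
      by (simp only: of_nat_bvconst bvconst_mult vv_def coef_id)
    then show "bvconst (Ks_log_coeff p s 1) * of_nat (p choose j) * A ^ j * B ^ (p - j) =
      vv * (bvconst [: of_nat (p choose j) / of_nat p :] * bvX ^ (p ^ (s - 1) * j) * bvY ^ (p ^ (s - 1) * (p - j)))"
      by (simp add: A_def B_def power_mult mult.assoc)
  qed
  also have "\<dots> = vv * Cp p s" by (simp add: Cp_def sum_distrib_left)
  finally show ?thesis by (simp add: A_def B_def)
qed

lemma L3: "II p (p ^ (2 * (s - 1))) 1
   (bvconst (Ks_log_coeff p s 1) * (Ks_rhs p s ^ (p ^ (1 * s)) - bvX ^ (p ^ (1 * s)) - bvY ^ (p ^ (1 * s))) - vv * Cp p s)"
proof -
  define M where "M = p ^ (2 * (s - 1))"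
  define q where "q = p ^ (s - 1)"
  define G where "G = Ks_rhs p s"
  define A where "A = bvX ^ q"
  define B where "B = bvY ^ q"
  have N: "p ^ s = q * p" unfolding q_def by (rule pq[OF pr s1])
  have q1: "q \<ge> 1" unfolding q_def using prime_gt_1_nat[OF pr] by (intro one_le_power) auto
  have A1: "II p M 2 (G ^ (p ^ s) - (bvX + bvY) ^ (p ^ s))" unfolding M_def G_def by (rule L2[OF pr s1])
  have "II p M 1 ((bvX + bvY) ^ q - bvX ^ q - bvY ^ q)"
  proof (rule II_binom_XY[OF pr q1])
    fix i assume i: "0 < i" "i < q"
    have "\<not> p ^ (s - 1) dvd i" using i unfolding q_def by (auto dest: dvd_imp_le)
    then have "p ^ (s - 1 + 1 - (s - 1)) dvd (q choose i)"
      unfolding q_def using i by (intro binom_pp_div[OF pr]) (auto simp: q_def)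
    then show "p ^ 1 dvd (q choose i) \<or> (M \<le> i \<and> M \<le> q - i)" by simp
  qed
  then have "II p M 1 ((bvX + bvY) ^ q - (A + B))" by (simp add: A_def B_def diff_diff_eq)
  moreover have IA: "II p M 0 A" unfolding A_def by (rule II_pow0[OF pr II_X[OF pr]])
  moreover have IB: "II p M 0 B" unfolding B_def by (rule II_pow0[OF pr II_Y[OF pr]])
  moreover have IXY: "II p M 0 ((bvX + bvY) ^ q)" by (rule II_pow0[OF pr II_add[OF pr II_X[OF pr] II_Y[OF pr]]])
  ultimately have A2: "II p M (1 + 1) (((bvX + bvY) ^ q) ^ p - (A + B) ^ p)"
    by (intro II_pow_p[OF pr] II_add[OF pr]) auto
  have "II p M 2 ((G ^ (p ^ s) - (bvX + bvY) ^ (p ^ s)) + (((bvX + bvY) ^ q) ^ p - (A + B) ^ p))"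
    using II_add[OF pr A1 A2[unfolded one_add_one]] .
  then have "II p M 1 (bvconst (Ks_log_coeff p s 1) * ((G ^ (p ^ s) - (bvX + bvY) ^ (p ^ s)) + (((bvX + bvY) ^ q) ^ p - (A + B) ^ p)))"
    by (rule II_log_coeff[OF pr, where j=1 and k=1, unfolded one_add_one])
  moreover have "bvconst (Ks_log_coeff p s 1) * (G ^ (p ^ (1 * s)) - bvX ^ (p ^ (1 * s)) - bvY ^ (p ^ (1 * s))) - vv * Cp p s
     = bvconst (Ks_log_coeff p s 1) * ((G ^ (p ^ s) - (bvX + bvY) ^ (p ^ s)) + (((bvX + bvY) ^ q) ^ p - (A + B) ^ p))"
  proof -
    have "vv * Cp p s = bvconst (Ks_log_coeff p s 1) * ((A + B) ^ p - A ^ p - B ^ p)"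
      using A3 by (simp add: A_def B_def q_def)
    moreover have "(bvX + bvY) ^ (p ^ s) = ((bvX + bvY) ^ q) ^ p" "bvX ^ (p ^ s) = A ^ p" "bvY ^ (p ^ s) = B ^ p"
      by (simp_all add: N A_def B_def power_mult)
    ultimately show ?thesis by (simp add: algebra_simps)
  qed
  ultimately show ?thesis by (simp add: G_def M_def)
qed

end


context fixes p s :: nat assumes pr: "prime p" and s1: "s > 1"
begin

lemma binom_cond:
  assumes k: "k \<ge> 2" and i: "0 < i" "i < p ^ (k * s)" and iM: "i < p ^ (2 * (s - 1))"
  shows "p ^ (k + 1) dvd (p ^ (k * s) choose i)"
proof -
  have "\<not> p ^ (2 * (s - 1)) dvd i" using i iM by (auto dest: dvd_imp_le)
  then have d: "p ^ (k * s + 1 - 2 * (s - 1)) dvd (p ^ (k * s) choose i)"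
    using i by (intro binom_pp_div[OF pr])
  define k' where "k' = k - 2"
  define s' where "s' = s - 2"
  have k': "k = k' + 2" using k by (simp add: k'_def)
  have s': "s = s' + 2" using s1 by (simp add: s'_def)
  have "k + 1 \<le> k * s + 1 - 2 * (s - 1)" unfolding k' s' by (simp add: algebra_simps)
  then show ?thesis using d by (meson dvd_trans le_imp_power_dvd)
qed

lemma L4:
  assumes k: "k \<ge> 2"
  shows "II p (p ^ (2 * (s - 1))) 1
   (bvconst (Ks_log_coeff p s k) * (Ks_rhs p s ^ (p ^ (k * s)) - bvX ^ (p ^ (k * s)) - bvY ^ (p ^ (k * s))))"
proof -
  define M where "M = p ^ (2 * (s - 1))"
  define G where "G = Ks_rhs p s"
  define N where "N = p ^ (k * s)"
  define n where "n = (k - 1) * s"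
  have IG: "II p M 0 G" unfolding G_def by (rule II_G[OF pr s1])
  have IXY: "II p M 0 (bvX + bvY)" by (rule II_add[OF pr II_X[OF pr] II_Y[OF pr]])
  have "II p M (2 + n) ((G ^ (p ^ s)) ^ (p ^ n) - ((bvX + bvY) ^ (p ^ s)) ^ (p ^ n))"
    using L2[OF pr s1] by (intro II_pow_pp[OF pr] II_pow0[OF pr] IG IXY) (auto simp: M_def G_def)
  moreover have "s + (k - 1) * s = k * s" using k by (cases k) auto
  then have "p ^ s * p ^ n = N" unfolding N_def n_def by (simp flip: power_add)
  ultimately have P1: "II p M (2 + n) (G ^ N - (bvX + bvY) ^ N)" by (simp flip: power_mult)
  have "(k - 1) * 1 \<le> (k - 1) * s" using s1 by (intro mult_le_mono2) auto
  then have "k + 1 \<le> 2 + n" unfolding n_def using k by linarith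
  then have P1': "II p M (k + 1) (G ^ N - (bvX + bvY) ^ N)" using II_mono[OF pr P1] by blast
  have N1: "N \<ge> 1" unfolding N_def using prime_gt_1_nat[OF pr] by (intro one_le_power) auto
  have P2: "II p M (k + 1) ((bvX + bvY) ^ N - bvX ^ N - bvY ^ N)"
  proof (rule II_binom_XY[OF pr N1])
    fix i assume i: "0 < i" "i < N"
    show "p ^ (k + 1) dvd (N choose i) \<or> (M \<le> i \<and> M \<le> N - i)"
    proof (cases "i < M")
      case True then show ?thesis using binom_cond[OF k i[unfolded N_def] True[unfolded M_def]] unfolding N_def by blast
    next
      case False
      show ?thesis
      proof (cases "N - i < M")
        case True
        have "N choose i = N choose (N - i)" using i by (intro binomial_symmetric) simp
        moreover have a: "0 < N - i" "N - i < p ^ (k * s)" using i unfolding N_def by auto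
        have "p ^ (k + 1) dvd (N choose (N - i))"
          using binom_cond[OF k a True[unfolded M_def]] unfolding N_def by blast
        ultimately show ?thesis by simp
      qed (use False in auto)
    qed
  qed
  have "II p M (k + 1) ((G ^ N - (bvX + bvY) ^ N) + ((bvX + bvY) ^ N - bvX ^ N - bvY ^ N))"
    by (rule II_add[OF pr P1' P2])
  then have "II p M (k + 1) (G ^ N - bvX ^ N - bvY ^ N)" by (simp add: algebra_simps)
  then have "II p M 1 (bvconst (Ks_log_coeff p s k) * (G ^ N - bvX ^ N - bvY ^ N))"
    by (intro II_log_coeff[OF pr]) (simp add: add.commute)
  then show ?thesis by (simp add: M_def G_def N_def)
qed

lemma LK:
  assumes k: "k \<ge> 1"
  shows "II p (p ^ (2 * (s - 1))) 1
   (bvconst (Ks_log_coeff p s k) * (Ks_rhs p s ^ (p ^ (k * s)) - bvX ^ (p ^ (k * s)) - bvY ^ (p ^ (k * s)))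
     - (if k = 1 then vv * Cp p s else 0))"
proof (cases "k = 1")
  case True then show ?thesis using L3[OF pr s1] by simp
next
  case False then show ?thesis using L4[of k] k by simp
qed

end


lemma JJ_pow_diff:
  assumes A: "JJ 1 A" and B: "JJ 1 B" and D: "JJ d (A - B)" and N: "N \<ge> 2"
  shows "JJ (d + 1) (A ^ N - B ^ N)"
proof -
  have "A ^ N - B ^ N = (A - B) * (\<Sum>i<N. B ^ (N - Suc i) * A ^ i)" by (rule power_diff_sumr2)
  moreover have "JJ 1 (\<Sum>i<N. B ^ (N - Suc i) * A ^ i)"
  proof (rule JJ_sum)
    fix i assume i: "i \<in> {..<N}"
    have "JJ (1 * (N - Suc i) + 1 * i) (B ^ (N - Suc i) * A ^ i)"
      by (intro JJ_mult JJ_pow B A)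
    moreover have "1 \<le> 1 * (N - Suc i) + 1 * i" using i N by auto
    ultimately show "JJ 1 (B ^ (N - Suc i) * A ^ i)" by (rule JJ_mono)
  qed
  ultimately show ?thesis using JJ_mult[OF D, of 1] by metis
qed

lemma log2_nth: "Ks_log2 p s H $ b $ a = (\<Sum>k\<le>a+b. Ks_log_coeff p s k * ((H ^ (p ^ (k * s))) $ b $ a))"
  by (simp add: Ks_log2_def)

lemma c0: "Ks_log_coeff p s 0 = 1" by (simp add: Ks_log_coeff_def)

lemma G00: assumes pr: "prime p" and s1: "s > 1" shows "Ks_rhs p s $ 0 $ 0 = 0"
proof -
  have "SS (p ^ (s - 1)) (vv * Cp p s)" by (rule SS_mult_left[OF SS_Cp[OF pr s1]])
  moreover have "0 < p ^ (s - 1)" using pr by (simp add: prime_gt_0_nat)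
  ultimately have "(vv * Cp p s) $ 0 $ 0 = 0" unfolding SS_def by blast
  then show ?thesis by (simp add: Ks_rhs_eq bvX_def bvY_def)
qed



lemma main_step:
  assumes pr: "prime p" and s1: "s > 1" and fgl: "is_Ks_fgl p s F"
  shows "a + b = d \<Longrightarrow> (a < p ^ (2 * (s - 1)) \<or> b < p ^ (2 * (s - 1))) \<Longrightarrow> pd p 1 ((F - Ks_rhs p s) $ b $ a)"
proof (induction d arbitrary: a b rule: less_induct)
  case (less d)
  define M where "M = p ^ (2 * (s - 1))"
  define G where "G = Ks_rhs p s"
  define Fd where "Fd = Abs_fps (\<lambda>b'. Abs_fps (\<lambda>a'. if a' + b' < d then F $ b' $ a' else G $ b' $ a'))"
  have Fd_nth: "\<And>a' b'. Fd $ b' $ a' = (if a' + b' < d then F $ b' $ a' else G $ b' $ a')"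
    by (simp add: Fd_def)
  have F00: "F $ 0 $ 0 = 0" using fgl by (simp add: is_Ks_fgl_def)
  have G00': "G $ 0 $ 0 = 0" unfolding G_def by (rule G00[OF pr s1])
  show ?case
  proof (cases "d = 0")
    case True
    then have "a = 0" "b = 0" using less.prems by auto
    then show ?thesis using F00 G00' pd_0[OF pr] by (simp add: G_def)
  next
    case False
    have IFd: "II p M 1 (Fd - G)"
      unfolding II_def
    proof (intro allI impI)
      fix a' b' assume r: "a' < M \<or> b' < M"
      show "pd p 1 ((Fd - G) $ b' $ a')"
      proof (cases "a' + b' < d")
        case True
        then have "pd p 1 ((F - G) $ b' $ a')" using less.IH[of "a' + b'" a' b'] r by (simp add: M_def G_def)
        then show ?thesis using True by (simp add: Fd_nth)
      qed (simp add: Fd_nth pd_0[OF pr])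
    qed
    have IG: "II p M 0 G" unfolding G_def by (rule II_G[OF pr s1])
    have "II p M 0 ((Fd - G) + G)" by (rule II_add[OF pr II_mono[OF pr IFd] IG]) simp
    then have IFd0: "II p M 0 Fd" by simp
    have JF: "JJ 1 F" using F00 by (auto simp: JJ_def)
    have JFd: "JJ 1 Fd" using F00 False by (auto simp: JJ_def Fd_nth)
    have JD: "JJ d (F - Fd)" by (auto simp: JJ_def Fd_nth)
    define c where "c k = Ks_log_coeff p s k" for k
    define N where "N k = p ^ (k * s)" for k
    define U where "U k = bvconst (c k) * (Fd ^ N k - G ^ N k)" for k
    define T where "T k = bvconst (c k) * (G ^ N k - bvX ^ N k - bvY ^ N k) - (if k = 1 then vv * Cp p s else 0)" for k
    have eqF: "(F ^ N k) $ b $ a = (Fd ^ N k) $ b $ a" if k: "k \<ge> 1" for k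
    proof -
      have "1 < p ^ (k * s)" using prime_gt_1_nat[OF pr] k s1 by (intro one_less_power) auto
      then have "N k \<ge> 2" by (simp add: N_def)
      then have "JJ (d + 1) (F ^ N k - Fd ^ N k)" by (rule JJ_pow_diff[OF JF JFd JD])
      then show ?thesis using less.prems by (auto simp: JJ_def)
    qed
    have IU: "II p M 1 (U k)" if k: "k \<ge> 1" for k
    proof -
      have "II p M (1 + k * s) (Fd ^ (p ^ (k * s)) - G ^ (p ^ (k * s)))"
        by (rule II_pow_pp[OF pr IFd0 IG _ IFd]) simp
      moreover have "1 + k \<le> 1 + k * s" using s1 by simp
      ultimately have "II p M (1 + k) (Fd ^ (p ^ (k * s)) - G ^ (p ^ (k * s)))" by (rule II_mono[OF pr])
      then show ?thesis unfolding U_def c_def N_def by (rule II_log_coeff[OF pr])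
    qed
    have IT: "II p M 1 (T k)" if k: "k \<ge> 1" for k
      unfolding T_def c_def N_def G_def M_def by (rule LK[OF pr s1 k])
    have reg: "a < M \<or> b < M" using less.prems by (simp add: M_def)
    define f where "f k = c k * ((F ^ N k) $ b $ a - (bvX ^ N k) $ b $ a - (bvY ^ N k) $ b $ a)" for k
    have "Ks_log2 p s F $ b $ a = (Ks_log2 p s bvX + Ks_log2 p s bvY) $ b $ a"
      using fgl by (simp add: is_Ks_fgl_def)
    then have "(\<Sum>k\<le>d. c k * (F ^ N k) $ b $ a) = (\<Sum>k\<le>d. c k * (bvX ^ N k) $ b $ a) + (\<Sum>k\<le>d. c k * (bvY ^ N k) $ b $ a)"
      using less.prems by (simp add: log2_nth c_def N_def)
    then have "(\<Sum>k\<le>d. f k) = 0"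
      by (simp add: f_def sum_subtractf right_diff_distrib)
    moreover have "{..d} = insert 0 {1..d}" by auto
    ultimately have sum0: "f 0 + (\<Sum>k\<in>{1..d}. f k) = 0" by simp
    have f0: "f 0 = (F - bvX - bvY) $ b $ a" by (simp add: f_def c_def N_def c0)
    have fk: "f k = U k $ b $ a + T k $ b $ a + (if k = 1 then (vv * Cp p s) $ b $ a else 0)" if k: "k \<in> {1..d}" for k
      using eqF[of k] k by (cases "k = 1") (simp_all add: f_def U_def T_def bvconst_mult_nth algebra_simps)
    have "(\<Sum>k\<in>{1..d}. f k) = (\<Sum>k\<in>{1..d}. U k $ b $ a + T k $ b $ a) + (\<Sum>k\<in>{1..d}. if k = 1 then (vv * Cp p s) $ b $ a else 0)"
      by (simp only: sum.cong[OF refl fk] sum.distrib)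
    also have "(\<Sum>k\<in>{1..d}. if k = 1 then (vv * Cp p s) $ b $ a else 0) = (vv * Cp p s) $ b $ a"
      using False by simp
    finally have "(\<Sum>k\<in>{1..d}. f k) = (\<Sum>k\<in>{1..d}. U k $ b $ a + T k $ b $ a) + (vv * Cp p s) $ b $ a" .
    then have "(F - G) $ b $ a = - (\<Sum>k\<in>{1..d}. U k $ b $ a + T k $ b $ a)"
      using sum0 f0 by (simp add: G_def Ks_rhs_eq algebra_simps)
    moreover have "pd p 1 (\<Sum>k\<in>{1..d}. U k $ b $ a + T k $ b $ a)"
      using IU IT reg by (intro pd_sum[OF pr] pd_add[OF pr]) (auto simp: II_def)
    ultimately show ?thesis by (simp add: G_def pd_uminus)
  qed
qed

theorem proposition3p2:
  fixes p s :: nat and F :: "rat poly fps fps"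
  assumes "prime p" and "s > 1" and "is_Ks_fgl p s F"
  shows "(\<forall>a b. a < p ^ (2 * (s - 1)) \<longrightarrow> p_divisible p ((F - Ks_rhs p s) $ b $ a))
       \<and> (\<forall>a b. b < p ^ (2 * (s - 1)) \<longrightarrow> p_divisible p ((F - Ks_rhs p s) $ b $ a))"
proof -
  have "\<And>q. p_divisible p q = pd p 1 q" by (simp add: p_divisible_def pd_def)
  then show ?thesis using main_step[OF assms refl] by auto
qed


end
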